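(* For any $\alpha,\beta\in\mathbb N$, $n\in\mathbb Z$ and $\epsilon\in\{0,1\}$: $M_{\alpha,n}M_{\beta,n+\epsilon}=\mathfrak q^{\min(\alpha,\beta)\epsilon}M_{\beta,n+\epsilon}M_{\alpha,n}$ in $U^>_q(L\mathfrak{sl}_2)$.
   Context: Let $q$ be a formal variable and $\mathfrak q=q^2$. $U^>_q(L\mathfrak{sl}_2)$ is the $\mathbb C(q)$-algebra generated by $e_r$ ($r\in\mathbb Z$) subject to $(z-q^2w)e(z)e(w)=(q^2z-w)e(w)e(z)$, $e(z)=\sum_re_rz^{-r}$. Set $M_{0,n}=1$, $M_{1,n}=e_{-n}$ and, for $k\ge1$, $M_{k,n}=\frac{(-1)^{k(k-1)/2}}{(1-\mathfrak q)^{k-1}}Y_k$ where $Y_1=M_{1,n-k+1}$, $Y_j=[Y_{j-1},M_{1,n-k+2j-1}]_{\mathfrak q^j}$ ($2\le j\le k$), $[x,y]_c=xy-c\,yx$. *)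

theory Defs
  imports Complex_Main "HOL-Computational_Algebra.Polynomial" "HOL-Computational_Algebra.Fraction_Field"
begin

type_synonym Cq = "complex poly fract"

definition qv :: Cq where "qv = Fract [:0, 1:] 1"

definition qq :: Cq where "qq = qv ^ 2"

definition Cq_algebra :: "(Cq \<Rightarrow> 'a::ring_1 \<Rightarrow> 'a) \<Rightarrow> bool" where
  "Cq_algebra sc \<longleftrightarrow> module sc \<and>
     (\<forall>a x y. sc a (x * y) = sc a x * y \<and> sc a (x * y) = x * sc a y)"

text \<open>Coefficientwise form of (z - q^2 w) e(z) e(w) = (q^2 z - w) e(w) e(z), with
  e(z) = sum_r e_r z^(-r): comparing coefficients of z^(-a) w^(-b).\<close>
definition loop_rel :: "(Cq \<Rightarrow> 'a::ring_1 \<Rightarrow> 'a) \<Rightarrow> (int \<Rightarrow> 'a) \<Rightarrow> bool" where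
  "loop_rel sc e \<longleftrightarrow> (\<forall>a b::int.
     e (a + 1) * e b - sc qq (e a * e (b + 1)) = sc qq (e b * e (a + 1)) - e (b + 1) * e a)"

definition qcomm :: "(Cq \<Rightarrow> 'a::ring_1 \<Rightarrow> 'a) \<Rightarrow> 'a \<Rightarrow> 'a \<Rightarrow> Cq \<Rightarrow> 'a" where
  "qcomm sc x y c = x * y - sc c (y * x)"

text \<open>Yc sc e k n i = Y_(i+1) in the definition of M_(k,n); M_(1,m) = e_(-m).\<close>
fun Yc :: "(Cq \<Rightarrow> 'a::ring_1 \<Rightarrow> 'a) \<Rightarrow> (int \<Rightarrow> 'a) \<Rightarrow> nat \<Rightarrow> int \<Rightarrow> nat \<Rightarrow> 'a" where
  "Yc sc e k n 0 = e (- (n - int k + 1))"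
| "Yc sc e k n (Suc i) =
     qcomm sc (Yc sc e k n i) (e (- (n - int k + 2 * int (i + 2) - 1))) (qq ^ (i + 2))"

definition M :: "(Cq \<Rightarrow> 'a::ring_1 \<Rightarrow> 'a) \<Rightarrow> (int \<Rightarrow> 'a) \<Rightarrow> nat \<Rightarrow> int \<Rightarrow> 'a" where
  "M sc e k n = (if k = 0 then 1
     else sc ((-1) ^ (k * (k - 1) div 2) / (1 - qq) ^ (k - 1)) (Yc sc e k n (k - 1)))"

end

theory Submission
  imports Defs
begin

lemma qv_nz: "qv \<noteq> 0"
  unfolding qv_def by (subst Zero_fract_def) (simp add: eq_fract)

lemma qq_nz: "qq \<noteq> 0"
  unfolding qq_def using qv_nz by simp

locale LA =
  fixes sc :: "Cq \<Rightarrow> 'a::ring_1 \<Rightarrow> 'a" and e :: "int \<Rightarrow> 'a"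
  assumes alg: "Cq_algebra sc" and rel: "loop_rel sc e"
begin

sublocale module sc
  using alg unfolding Cq_algebra_def by blast

lemma sc_ml [simp]: "sc a x * y = sc a (x * y)"
  using alg unfolding Cq_algebra_def by metis

lemma sc_mr [simp]: "x * sc a y = sc a (x * y)"
  using alg unfolding Cq_algebra_def by metis

definition f :: "int \<Rightarrow> 'a" where "f j = e (- j)"

lemma R: "f i * f j - sc qq (f j * f i) = sc qq (f (i+1) * f (j-1)) - f (j-1) * f (i+1)"
proof -
  have h: "e (- i - 1 + 1) * e (- j) - sc qq (e (- i - 1) * e (- j + 1))
      = sc qq (e (- j) * e (- i - 1 + 1)) - e (- j + 1) * e (- i - 1)"
    using rel unfolding loop_rel_def by blast
  have 1: "- i - 1 + 1 = - i" and 2: "- i - 1 = - (i + 1)" and 3: "- j + 1 = - (j - 1)" by simp_all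
  have "f i * f j - sc qq (f (i+1) * f (j-1)) = sc qq (f j * f i) - f (j-1) * f (i+1)"
    using h unfolding 1 unfolding 2 3 f_def .
  then show ?thesis by (simp add: algebra_simps)
qed

lemma two_nz: "(2::Cq) \<noteq> 0"
proof -
  have "(2::Cq) = Fract 2 1" using of_nat_fract[of 2] by simp
  moreover have "Fract (2::complex poly) 1 \<noteq> 0"
    by (subst Zero_fract_def) (simp add: eq_fract)
  ultimately show ?thesis by simp
qed

lemma two_zero: assumes "x + x = (0::'a)" shows "x = 0"
proof -
  have "sc 2 x = 0" using assms scale_left_distrib[of 1 1 x] by simp
  then have "sc (inverse 2) (sc 2 x) = 0" by simp
  then show ?thesis using two_nz by simp
qed

lemma adj: "f i * f (i+1) = sc qq (f (i+1) * f i)"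
proof -
  define x where "x = f i * f (i+1) - sc qq (f (i+1) * f i)"
  have "x = sc qq (f (i+1) * f i) - f i * f (i+1)"
    using R[of i "i+1"] unfolding x_def by simp
  then have "x = - x" unfolding x_def by (simp only: minus_diff_eq)
  then have "x + x = 0" by (metis add.right_inverse)
  then have "x = 0" by (rule two_zero)
  then show ?thesis unfolding x_def by simp
qed

lemma comm2:
  assumes hu: "X * u = sc c (u * X)" and hv: "X * v = sc d (v * X)"
  shows "X * (u * v) = sc (c * d) (u * v * X)"
proof -
  have "X * (u * v) = (X * u) * v" by (simp add: mult.assoc)
  also have "\<dots> = sc c (u * (X * v))" by (simp add: hu mult.assoc)
  also have "\<dots> = sc (c * d) (u * v * X)" by (simp add: hv mult.assoc)
  finally show ?thesis .
qed

lemma qcomm_mult: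
  assumes hu: "X * u = sc c (u * X)" and hv: "X * v = sc d (v * X)"
  shows "X * qcomm sc u v t = sc (c * d) (qcomm sc u v t * X)"
proof -
  have 1: "X * (u * v) = sc (c * d) (u * v * X)" by (rule comm2[OF hu hv])
  have 2: "X * (v * u) = sc (d * c) (v * u * X)" by (rule comm2[OF hv hu])
  show ?thesis unfolding qcomm_def
    by (simp add: right_diff_distrib left_diff_distrib 1 2 scale_right_diff_distrib mult_ac)
qed


lemma right_step:
  assumes hX: "X * h = sc d (h * X)"
    and hV: "X * (sc qq (g*h) - h*g) = sc (a*d) ((sc qq (g*h) - h*g) * X)"
    and hd: "d = b * qq"
  shows "qcomm sc X g a * h = sc b (h * qcomm sc X g a)"
proof -
  have e1: "g * (X * h) = sc d (g * (h * X))" by (simp add: hX)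
  have e2: "sc d (h * (X * g)) = X * (h * g)"
    using arg_cong[OF hX, of "\<lambda>z. z * g"] by (simp add: mult.assoc)
  have "sc qq (qcomm sc X g a * h) - sc d (h * qcomm sc X g a)
      = sc qq (X * (g * h)) - sc (qq * a) (g * (X * h)) - sc d (h * (X * g)) + sc (d * a) (h * (g * X))"
    unfolding qcomm_def by (simp add: algebra_simps)
  also have "\<dots> = X * (sc qq (g*h) - h*g) - sc (a*d) ((sc qq (g*h) - h*g) * X)"
    unfolding e1 e2 by (simp add: algebra_simps)
  also have "\<dots> = 0" using hV by simp
  finally have "sc qq (qcomm sc X g a * h) = sc qq (sc b (h * qcomm sc X g a))"
    using hd by (simp add: mult.commute)
  then have "sc (inverse qq) (sc qq (qcomm sc X g a * h)) = sc (inverse qq) (sc qq (sc b (h * qcomm sc X g a)))"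
    by simp
  then show ?thesis using qq_nz by (simp add: mult.assoc[symmetric])
qed

lemma left_step:
  assumes hX: "X * h = sc d (h * X)"
    and hW: "sc a (X * (g*h - sc qq (h*g))) = sc d ((g*h - sc qq (h*g)) * X)"
    and hb: "b = d * qq"
  shows "qcomm sc g X a * h = sc b (h * qcomm sc g X a)"
proof -
  have e1: "g * (X * h) = sc d (g * (h * X))" by (simp add: hX)
  have e2: "sc d (h * (X * g)) = X * (h * g)"
    using arg_cong[OF hX, of "\<lambda>z. z * g"] by (simp add: mult.assoc)
  have "qcomm sc g X a * h - sc b (h * qcomm sc g X a)
      = g * (X * h) - sc a (X * (g * h)) - sc qq (sc d (h * (g * X))) + sc (a * qq) (sc d (h * (X * g)))"
    unfolding qcomm_def hb by (simp add: algebra_simps)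
  also have "\<dots> = sc d ((g*h - sc qq (h*g)) * X) - sc a (X * (g*h - sc qq (h*g)))"
    unfolding e1 e2 by (simp add: algebra_simps)
  also have "\<dots> = 0" using hW by simp
  finally show ?thesis by simp
qed


lemma pw: "x + y = z \<Longrightarrow> qq powi x * qq powi y = qq powi z"
  using power_int_add[of qq x y] qq_nz by simp

lemma lin2:
  assumes "X * p = sc c (p * X)" "X * r = sc c (r * X)"
  shows "X * (p - sc t r) = sc c ((p - sc t r) * X)"
    and "X * (sc t p - r) = sc c ((sc t p - r) * X)"
  using assms by (simp_all add: right_diff_distrib left_diff_distrib scale_right_diff_distrib mult.commute)

lemma qassoc:
  assumes "Z * W = W * Z" "W = a * c - sc qq (c * a)"
  shows "qcomm sc (qcomm sc a Z s) c (s * qq) = qcomm sc a (qcomm sc Z c s) (s * qq)"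
proof -
  have "qcomm sc (qcomm sc a Z s) c (s * qq) - qcomm sc a (qcomm sc Z c s) (s * qq) = sc s (W * Z - Z * W)"
    unfolding qcomm_def assms(2) by (simp add: algebra_simps)
  also have "\<dots> = 0" using assms(1) by simp
  finally show ?thesis by simp
qed

fun YY :: "nat \<Rightarrow> int \<Rightarrow> 'a" where
  "YY 0 m = f m"
| "YY (Suc l) m = qcomm sc (YY l (m - 1)) (f (m + int l + 1)) (qq ^ (l + 2))"

lemma Yc_YY: "Yc sc e k n i = YY i (n - int k + int i + 1)"
proof (induction i)
  case 0 then show ?case by (simp add: f_def)
next
  case (Suc i)
  have 1: "n - int k + int (Suc i) + 1 - 1 = n - int k + int i + 1" by simp
  have 2: "- (n - int k + 2 * int (i + 2) - 1) = - (n - int k + int (Suc i) + 1 + int i + 1)" by simp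
  show ?case by (simp only: Yc.simps YY.simps Suc 1 2 f_def)
qed

lemma A0: "\<bar>j - n\<bar> \<le> 1 \<Longrightarrow> f n * f j = sc (qq powi (j - n)) (f j * f n)"
proof -
  assume "\<bar>j - n\<bar> \<le> 1"
  then consider "j = n" | "j = n + 1" | "j = n - 1" by linarith
  then show ?thesis
  proof cases
    case 1 then show ?thesis by simp
  next
    case 2 then show ?thesis using adj[of n] by simp
  next
    case 3
    have "f (n - 1) * f n = sc qq (f n * f (n - 1))" using adj[of "n - 1"] by simp
    then have "sc (inverse qq) (f (n - 1) * f n) = f n * f (n - 1)"
      using qq_nz by simp
    then show ?thesis using 3 by (simp add: power_int_minus)
  qed
qed

lemma AB:
  "(\<forall>n j. \<bar>j - n\<bar> \<le> int l + 1 \<longrightarrow> YY l n * f j = sc (qq powi (j - n)) (f j * YY l n))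
   \<and> (\<forall>n. YY (Suc l) n = qcomm sc (f (n - int l - 1)) (YY l (n + 1)) (qq ^ (l + 2)))"
proof (induction l)
  case 0
  have "\<forall>n j. \<bar>j - n\<bar> \<le> int 0 + 1 \<longrightarrow> YY 0 n * f j = sc (qq powi (j - n)) (f j * YY 0 n)"
  proof (intro allI impI)
    fix n j :: int assume "\<bar>j - n\<bar> \<le> int 0 + 1"
    then show "YY 0 n * f j = sc (qq powi (j - n)) (f j * YY 0 n)" using A0[of j n] by simp
  qed
  moreover have "\<forall>n. YY (Suc 0) n = qcomm sc (f (n - int 0 - 1)) (YY 0 (n + 1)) (qq ^ (0 + 2))"
    by simp
  ultimately show ?case by blast
next
  case (Suc l)
  have IA: "\<And>n j. \<bar>j - n\<bar> \<le> int l + 1 \<Longrightarrow> YY l n * f j = sc (qq powi (j - n)) (f j * YY l n)"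
    using Suc.IH by blast
  have IB: "\<And>n. YY (Suc l) n = qcomm sc (f (n - int l - 1)) (YY l (n + 1)) (qq ^ (l + 2))"
    using Suc.IH by blast
  have B: "YY (Suc (Suc l)) n = qcomm sc (f (n - int (Suc l) - 1)) (YY (Suc l) (n + 1)) (qq ^ (Suc l + 2))" for n
  proof -
    define Z where "Z = YY l n"
    define a where "a = f (n - int l - 2)"
    define c where "c = f (n + int l + 2)"
    have W: "a * c - sc qq (c * a) = sc qq (f (n - int l - 1) * f (n + int l + 1)) - f (n + int l + 1) * f (n - int l - 1)"
      using R[of "n - int l - 2" "n + int l + 2"] unfolding a_def c_def by (simp add: algebra_simps)
    have z1: "Z * f (n - int l - 1) = sc (qq powi (- int l - 1)) (f (n - int l - 1) * Z)"
      using IA[of "n - int l - 1" n] unfolding Z_def by simp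
    have z2: "Z * f (n + int l + 1) = sc (qq powi (int l + 1)) (f (n + int l + 1) * Z)"
      using IA[of "n + int l + 1" n] unfolding Z_def by simp
    have p1: "qq powi (- int l - 1) * qq powi (int l + 1) = 1" using pw[of "- int l - 1" "int l + 1" 0] by simp
    have p2: "qq powi (int l + 1) * qq powi (- int l - 1) = 1" using pw[of "int l + 1" "- int l - 1" 0] by simp
    have c1: "Z * (f (n - int l - 1) * f (n + int l + 1)) = sc 1 (f (n - int l - 1) * f (n + int l + 1) * Z)"
      using comm2[OF z1 z2] p1 by simp
    have c2: "Z * (f (n + int l + 1) * f (n - int l - 1)) = sc 1 (f (n + int l + 1) * f (n - int l - 1) * Z)"
      using comm2[OF z2 z1] p2 by simp
    have ZW: "Z * (a * c - sc qq (c * a)) = (a * c - sc qq (c * a)) * Z"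
      unfolding W using lin2(2)[OF c1 c2, of qq] by simp
    have i1: "n - 1 - int l - 1 = n - int l - 2" "n - 1 + 1 = n" "n + int (Suc l) + 1 = n + int l + 2"
      "n - int (Suc l) - 1 = n - int l - 2" "n + 1 - 1 = n" "n + 1 + int l + 1 = n + int l + 2"
      "qq ^ (Suc l + 2) = qq ^ (l + 2) * qq" by simp_all
    have L: "YY (Suc (Suc l)) n = qcomm sc (qcomm sc a Z (qq ^ (l + 2))) c (qq ^ (l + 2) * qq)"
      unfolding YY.simps(2)[of "Suc l" n] IB[of "n - 1"] i1 Z_def a_def c_def ..
    have Rr: "qcomm sc (f (n - int (Suc l) - 1)) (YY (Suc l) (n + 1)) (qq ^ (Suc l + 2))
        = qcomm sc a (qcomm sc Z c (qq ^ (l + 2))) (qq ^ (l + 2) * qq)"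
      unfolding YY.simps(2)[of l "n + 1"] i1 Z_def a_def c_def ..
    show ?thesis unfolding L Rr by (rule qassoc[OF ZW refl])
  qed
  have A: "YY (Suc l) n * f j = sc (qq powi (j - n)) (f j * YY (Suc l) n)"
    if hj: "\<bar>j - n\<bar> \<le> int (Suc l) + 1" for n j
  proof (cases "j \<le> n + int l")
    case True
    define X where "X = YY l (n - 1)"
    define g where "g = f (n + int l + 1)"
    have Y: "YY (Suc l) n = qcomm sc X g (qq ^ (l + 2))" unfolding X_def g_def by simp
    have hX: "X * f j = sc (qq powi (j - (n - 1))) (f j * X)"
      unfolding X_def using hj True by (intro IA) simp
    have hd: "qq powi (j - (n - 1)) = qq powi (j - n) * qq"
      using pw[of "j - n" 1 "j - (n - 1)"] by simp
    have hV: "X * (sc qq (g * f j) - f j * g) = sc (qq ^ (l + 2) * qq powi (j - (n - 1))) ((sc qq (g * f j) - f j * g) * X)"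
    proof (cases "j = n + int l")
      case True
      have "sc qq (g * f j) - f j * g = 0" unfolding g_def True using adj[of "n + int l"] by (simp add: add.assoc)
      then show ?thesis by simp
    next
      case False
      have V: "sc qq (g * f j) - f j * g = f (n + int l) * f (j + 1) - sc qq (f (j + 1) * f (n + int l))"
        using R[of j "n + int l + 1"] unfolding g_def by (simp add: algebra_simps)
      have x1: "X * f (j + 1) = sc (qq powi (j + 1 - (n - 1))) (f (j + 1) * X)"
        unfolding X_def using hj True False by (intro IA) simp
      have x2: "X * f (n + int l) = sc (qq powi (n + int l - (n - 1))) (f (n + int l) * X)"
        unfolding X_def by (intro IA) simp
      have pe: "qq powi (n + int l - (n - 1)) * qq powi (j + 1 - (n - 1)) = qq ^ (l + 2) * qq powi (j - (n - 1))"
      proof -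
        have "qq powi (n + int l - (n - 1)) * qq powi (j + 1 - (n - 1)) = qq powi (int (l + 2) + (j - (n - 1)))"
          by (rule pw) simp
        also have "\<dots> = qq powi (int (l + 2)) * qq powi (j - (n - 1))"
          by (rule pw[symmetric]) simp
        also have "\<dots> = qq ^ (l + 2) * qq powi (j - (n - 1))"
          by (simp only: power_int_of_nat)
        finally show ?thesis .
      qed
      have pe2: "qq powi (j + 1 - (n - 1)) * qq powi (n + int l - (n - 1)) = qq ^ (l + 2) * qq powi (j - (n - 1))"
        using pe by (simp add: mult.commute)
      have y1: "X * (f (n + int l) * f (j + 1)) = sc (qq ^ (l + 2) * qq powi (j - (n - 1))) (f (n + int l) * f (j + 1) * X)"
        using comm2[OF x2 x1] unfolding pe .
      have y2: "X * (f (j + 1) * f (n + int l)) = sc (qq ^ (l + 2) * qq powi (j - (n - 1))) (f (j + 1) * f (n + int l) * X)"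
        using comm2[OF x1 x2] unfolding pe2 .
      show ?thesis unfolding V by (rule lin2(1)[OF y1 y2])
    qed
    show ?thesis unfolding Y by (rule right_step[OF hX hV hd])
  next
    case False
    define X where "X = YY l (n + 1)"
    define g where "g = f (n - int l - 1)"
    have Y: "YY (Suc l) n = qcomm sc g X (qq ^ (l + 2))" unfolding X_def g_def using IB by simp
    have hX: "X * f j = sc (qq powi (j - (n + 1))) (f j * X)"
      unfolding X_def using hj False by (intro IA) simp
    have hb: "qq powi (j - n) = qq powi (j - (n + 1)) * qq"
      using pw[of "j - (n + 1)" 1 "j - n"] by simp
    have W: "g * f j - sc qq (f j * g) = sc qq (f (n - int l) * f (j - 1)) - f (j - 1) * f (n - int l)"
      using R[of "n - int l - 1" j] unfolding g_def by (simp add: algebra_simps)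
    have x1: "X * f (n - int l) = sc (qq powi (n - int l - (n + 1))) (f (n - int l) * X)"
      unfolding X_def by (intro IA) simp
    have x2: "X * f (j - 1) = sc (qq powi (j - 1 - (n + 1))) (f (j - 1) * X)"
      unfolding X_def using hj False by (intro IA) simp
    define c where "c = qq powi (n - int l - (n + 1)) * qq powi (j - 1 - (n + 1))"
    have c': "qq powi (j - 1 - (n + 1)) * qq powi (n - int l - (n + 1)) = c"
      unfolding c_def by (simp add: mult.commute)
    have y1: "X * (f (n - int l) * f (j - 1)) = sc c (f (n - int l) * f (j - 1) * X)"
      using comm2[OF x1 x2] unfolding c_def .
    have y2: "X * (f (j - 1) * f (n - int l)) = sc c (f (j - 1) * f (n - int l) * X)"
      using comm2[OF x2 x1] unfolding c' .
    have XW: "X * (g * f j - sc qq (f j * g)) = sc c ((g * f j - sc qq (f j * g)) * X)"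
      unfolding W by (rule lin2(2)[OF y1 y2])
    have pe: "qq ^ (l + 2) * c = qq powi (j - (n + 1))"
    proof -
      have "c = qq powi (j - n - int l - 3)" unfolding c_def by (rule pw) simp
      then have "qq ^ (l + 2) * c = qq powi (int (l + 2)) * qq powi (j - n - int l - 3)"
        by (simp only: power_int_of_nat)
      also have "\<dots> = qq powi (j - (n + 1))" by (rule pw) simp
      finally show ?thesis .
    qed
    have hW: "sc (qq ^ (l + 2)) (X * (g * f j - sc qq (f j * g))) = sc (qq powi (j - (n + 1))) ((g * f j - sc qq (f j * g)) * X)"
      unfolding XW pe[symmetric] by simp
    show ?thesis unfolding Y by (rule left_step[OF hX hW hb])
  qed
  show ?case using A B by blast
qed


lemma A_all: "\<bar>j - n\<bar> \<le> int l + 1 \<Longrightarrow> YY l n * f j = sc (qq powi (j - n)) (f j * YY l n)"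
  using AB[of l] by blast

lemma C:
  assumes hX: "\<And>j. \<bar>j - n\<bar> \<le> int k + 1 \<Longrightarrow> X * f j = sc (qq powi (j - n)) (f j * X)"
  shows "n - int k - 1 \<le> m - int l \<Longrightarrow> m + int l \<le> n + int k + 1 \<Longrightarrow>
    X * YY l m = sc (qq powi (int (l + 1) * (m - n))) (YY l m * X)"
proof (induction l arbitrary: m)
  case 0
  then show ?case using hX[of m] by simp
next
  case (Suc l)
  have i1: "X * YY l (m - 1) = sc (qq powi (int (l + 1) * (m - 1 - n))) (YY l (m - 1) * X)"
    using Suc by simp
  have i2: "X * f (m + int l + 1) = sc (qq powi (m + int l + 1 - n)) (f (m + int l + 1) * X)"
    using Suc.prems by (intro hX) simp
  have pe: "qq powi (int (l + 1) * (m - 1 - n)) * qq powi (m + int l + 1 - n) = qq powi (int (Suc l + 1) * (m - n))"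
    by (rule pw) (simp add: algebra_simps)
  show ?case using qcomm_mult[OF i1 i2, of "qq ^ (l + 2)"] unfolding pe by simp
qed

lemma M_YY: "\<exists>c. M sc e (Suc a) n = sc c (YY a n)"
proof -
  have "Yc sc e (Suc a) n a = YY a n" by (simp add: Yc_YY)
  then show ?thesis unfolding M_def by auto
qed

lemma core:
  assumes "\<epsilon> \<in> {0, 1::nat}"
  shows "YY a n * YY b (n + int \<epsilon>) = sc (qq ^ (min (Suc a) (Suc b) * \<epsilon>)) (YY b (n + int \<epsilon>) * YY a n)"
proof (cases "b \<le> a")
  case True
  have "YY a n * YY b (n + int \<epsilon>) = sc (qq powi (int (b + 1) * (n + int \<epsilon> - n))) (YY b (n + int \<epsilon>) * YY a n)"
    by (rule C[of n a]) (use A_all assms True in auto)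
  moreover have "qq powi (int (b + 1) * (n + int \<epsilon> - n)) = qq ^ (min (Suc a) (Suc b) * \<epsilon>)"
  proof -
    have "int (b + 1) * (n + int \<epsilon> - n) = int (min (Suc a) (Suc b) * \<epsilon>)" using True by (simp add: algebra_simps)
    then show ?thesis by (simp only: power_int_of_nat)
  qed
  ultimately show ?thesis by simp
next
  case False
  define m where "m = n + int \<epsilon>"
  have h: "YY b m * YY a n = sc (qq powi (int (a + 1) * (n - m))) (YY a n * YY b m)"
    by (rule C[of m b]) (use A_all assms False m_def in auto)
  have p0: "qq powi (int (a + 1) * (m - n)) * qq powi (int (a + 1) * (n - m)) = 1"
    using pw[of "int (a + 1) * (m - n)" "int (a + 1) * (n - m)" 0] by (simp add: algebra_simps)
  have "sc (qq powi (int (a + 1) * (m - n))) (YY b m * YY a n) = YY a n * YY b m"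
    unfolding h using p0 by simp
  moreover have "qq powi (int (a + 1) * (m - n)) = qq ^ (min (Suc a) (Suc b) * \<epsilon>)"
  proof -
    have "int (a + 1) * (m - n) = int (min (Suc a) (Suc b) * \<epsilon>)" using False m_def by (simp add: algebra_simps)
    then show ?thesis by (simp only: power_int_of_nat)
  qed
  ultimately show ?thesis unfolding m_def[symmetric] by simp
qed

lemma main:
  assumes "\<epsilon> \<in> {0, 1::nat}"
  shows "M sc e \<alpha> n * M sc e \<beta> (n + int \<epsilon>)
       = sc (qq ^ (min \<alpha> \<beta> * \<epsilon>)) (M sc e \<beta> (n + int \<epsilon>) * M sc e \<alpha> n)"
proof (cases "\<alpha> = 0 \<or> \<beta> = 0")
  case True
  then show ?thesis by (auto simp: M_def)
next
  case False
  then obtain a b where ab: "\<alpha> = Suc a" "\<beta> = Suc b" by (meson not0_implies_Suc)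
  obtain c1 where c1: "M sc e (Suc a) n = sc c1 (YY a n)" using M_YY by blast
  obtain c2 where c2: "M sc e (Suc b) (n + int \<epsilon>) = sc c2 (YY b (n + int \<epsilon>))" using M_YY by blast
  show ?thesis unfolding ab c1 c2 using core[OF assms, of a n b] by (simp add: mult_ac)
qed

end

theorem proposition6p5:
  fixes sc :: "Cq \<Rightarrow> 'a::ring_1 \<Rightarrow> 'a" and e :: "int \<Rightarrow> 'a"
    and \<alpha> \<beta> :: nat and n :: int and \<epsilon> :: nat
  assumes "Cq_algebra sc" and "loop_rel sc e" and "\<epsilon> \<in> {0, 1}"
  shows "M sc e \<alpha> n * M sc e \<beta> (n + int \<epsilon>)
       = sc (qq ^ (min \<alpha> \<beta> * \<epsilon>)) (M sc e \<beta> (n + int \<epsilon>) * M sc e \<alpha> n)"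
  by (rule LA.main[OF LA.intro[OF assms(1,2)] assms(3)])

end
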